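(* Let $\alpha\in(0,1]$ and $\beta\in(0,\alpha)$. Every $K\in\mathcal{K}$ satisfies \[ |K(x,y)-K(x',y')|\le3\|K\|(|x-x'|+|y-y'|)^\beta . \] If $K,K'\in\mathcal{K}$, then $K+K'\in\mathcal{K}$ with $\|K+K'\|\le\|K\|+\|K'\|$, and (for compatible matrix sizes) $KK'\in\mathcal{K}$ with $\|KK'\|\le6\|K\|\|K'\|$. Finally, if $K\in\mathcal{K}$ is everywhere invertible and $|K^{-1}|\le h$ for some finite $h$, then $K^{-1}\in\mathcal{K}$ and $\|K^{-1}\|\le5\max(1,h^3)\max(1,\|K\|^3)$.
   Context: $\mathbb{R}^d=\mathbb{R}^{d_u}\times\mathbb{R}^{d_s}$ with points $(x,y)$; matrix norms are operator norms. $\mathcal{K}=\mathcal{K}^{\alpha,\beta}$ is the class of matrix-valued functions $K$ on $\mathbb{R}^d$ for which there is a constant $C$ such that for all $x,x'\in\mathbb{R}^{d_u}$ and $y,y'\in\mathbb{R}^{d_s}$: $|K(x,y)|\le C$; $|K(x,y)-K(x',y)|\le C|x-x'|^\beta$; $|K(x,y)-K(x,y')|\le C|y-y'|^\alpha$; and $|K(x,y)-K(x',y)-K(x,y')+K(x',y')|\le C|x-x'|^\beta|y-y'|^{\alpha-\beta}$. For $K\in\mathcal{K}$, $\|K\|$ is the smallest such $C$. *)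

theory Defs
  imports "HOL-Analysis.Analysis"
begin

definition mnorm :: "real^'n^'m \<Rightarrow> real" where
  "mnorm A = onorm (\<lambda>v. A *v v)"

text \<open>C is an admissible constant for K in the class K^{alpha,beta}.
  Points of R^d = R^{d_u} x R^{d_s} are pairs (x,y).\<close>
definition Kbound :: "real \<Rightarrow> real \<Rightarrow> ('u::euclidean_space \<Rightarrow> 's::euclidean_space \<Rightarrow> real^'n^'m) \<Rightarrow> real \<Rightarrow> bool" where
  "Kbound \<alpha> \<beta> K C \<longleftrightarrow>
     (\<forall>x y. mnorm (K x y) \<le> C) \<and>
     (\<forall>x x' y. mnorm (K x y - K x' y) \<le> C * norm (x - x') powr \<beta>) \<and>
     (\<forall>x y y'. mnorm (K x y - K x y') \<le> C * norm (y - y') powr \<alpha>) \<and>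
     (\<forall>x x' y y'. mnorm (K x y - K x' y - K x y' + K x' y')
                     \<le> C * norm (x - x') powr \<beta> * norm (y - y') powr (\<alpha> - \<beta>))"

definition inK :: "real \<Rightarrow> real \<Rightarrow> ('u::euclidean_space \<Rightarrow> 's::euclidean_space \<Rightarrow> real^'n^'m) \<Rightarrow> bool" where
  "inK \<alpha> \<beta> K \<longleftrightarrow> (\<exists>C. Kbound \<alpha> \<beta> K C)"

definition Knorm :: "real \<Rightarrow> real \<Rightarrow> ('u::euclidean_space \<Rightarrow> 's::euclidean_space \<Rightarrow> real^'n^'m) \<Rightarrow> real" where
  "Knorm \<alpha> \<beta> K = Inf {C. Kbound \<alpha> \<beta> K C}"

end

theory Submission
  imports Defs
begin


lemma mm_add_r: "((A::real^'n^'m) + B) ** (C::real^'p^'n) = A ** C + B ** C"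
  by (vector matrix_matrix_mult_def sum.distrib[symmetric] field_simps)
lemma mm_add_l: "(A::real^'n^'m) ** ((B::real^'p^'n) + C) = A ** B + A ** C"
  by (rule matrix_add_ldistrib)
lemma mm_diff_r: "((A::real^'n^'m) - B) ** (C::real^'p^'n) = A ** C - B ** C"
  by (vector matrix_matrix_mult_def sum_subtractf[symmetric] field_simps)
lemma mm_diff_l: "(A::real^'n^'m) ** ((B::real^'p^'n) - C) = A ** B - A ** C"
  by (vector matrix_matrix_mult_def sum_subtractf[symmetric] field_simps)
lemma mm_neg_l: "(A::real^'n^'m) ** (- (B::real^'p^'n)) = - (A ** B)"
  by (vector matrix_matrix_mult_def sum_negf[symmetric] field_simps)

lemma mnorm_ge0: "0 \<le> mnorm (A::real^'n^'m)"
  unfolding mnorm_def by (rule onorm_pos_le) simp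

lemma mnorm_add: "mnorm ((A::real^'n^'m) + B) \<le> mnorm A + mnorm B"
proof -
  have e: "(\<lambda>v. (A + B) *v v) = (\<lambda>v. A *v v + B *v v)"
    by (rule ext) (rule matrix_vector_mult_add_rdistrib)
  have "mnorm (A + B) = onorm (\<lambda>v. A *v v + B *v v)"
    unfolding mnorm_def e ..
  also have "\<dots> \<le> mnorm A + mnorm B"
    unfolding mnorm_def by (rule onorm_triangle) simp_all
  finally show ?thesis .
qed

lemma mnorm_neg: "mnorm (- (A::real^'n^'m)) = mnorm A"
proof -
  have "(\<lambda>v. (- A) *v v) = (\<lambda>v. - (A *v v))"
    by (rule ext) (metis add.inverse_neutral add_eq_0_iff matrix_vector_mult_0 matrix_vector_mult_add_rdistrib)
  thus ?thesis unfolding mnorm_def using onorm_neg[of "\<lambda>v. A *v v"] by simp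
qed

lemma mnorm_sym: "mnorm ((A::real^'n^'m) - B) = mnorm (B - A)"
  by (metis minus_diff_eq mnorm_neg)

lemma mnorm_diff: "mnorm ((A::real^'n^'m) - B) \<le> mnorm A + mnorm B"
  by (metis diff_conv_add_uminus mnorm_add mnorm_neg)

lemma mnorm_mul: "mnorm ((A::real^'n^'m) ** (B::real^'p^'n)) \<le> mnorm A * mnorm B"
proof -
  have "(\<lambda>v. (A ** B) *v v) = (\<lambda>v. A *v v) \<circ> (\<lambda>v. B *v v)"
    by (rule ext) (simp add: matrix_vector_mul_assoc)
  thus ?thesis unfolding mnorm_def using onorm_compose[of "\<lambda>v. A *v v" "\<lambda>v. B *v v"] by simp
qed

lemma mnorm_mul_le: "mnorm (A::real^'n^'m) \<le> a \<Longrightarrow> mnorm (B::real^'p^'n) \<le> b \<Longrightarrow> mnorm (A ** B) \<le> a * b"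
  by (meson mnorm_ge0 mnorm_mul mult_mono order_trans)

lemma switch:
  fixes d a b v \<gamma> \<alpha> :: real
  assumes "0 \<le> d" "0 \<le> a" "0 \<le> b" "0 \<le> \<gamma>" "\<gamma> \<le> \<alpha>" "v \<le> a" "v \<le> b * d powr \<alpha>"
  shows "v \<le> max a b * d powr \<gamma>"
proof (cases "d \<le> 1")
  case True
  hence "d powr \<alpha> \<le> d powr \<gamma>" using powr_mono' assms by blast
  hence "b * d powr \<alpha> \<le> max a b * d powr \<gamma>"
    by (intro mult_mono) (auto simp: assms le_max_iff_disj)
  thus ?thesis using assms by linarith
next
  case False
  hence "1 \<le> d powr \<gamma>" using ge_one_powr_ge_zero assms by simp
  hence "max a b \<le> max a b * d powr \<gamma>"
    by (metis assms(2) max.coboundedI1 mult_le_cancel_left1 not_le order_trans)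
  thus ?thesis using assms by linarith
qed

lemma inf_helper:
  fixes S :: "real set"
  assumes "S \<noteq> {}" "\<forall>C\<in>S. v \<le> C * a" "0 \<le> a" "\<forall>C\<in>S. 0 \<le> C"
  shows "v \<le> Inf S * a"
proof (cases "a = 0")
  case True
  then show ?thesis using assms by force
next
  case False
  hence "a > 0" using assms by simp
  have "v / a \<le> Inf S"
    by (rule cInf_greatest) (use assms \<open>a>0\<close> in \<open>auto simp: divide_le_eq\<close>)
  thus ?thesis using \<open>a>0\<close> by (simp add: divide_le_eq)
qed



lemma Kbound_ge0: "Kbound \<alpha> \<beta> K C \<Longrightarrow> 0 \<le> C"
  unfolding Kbound_def by (meson mnorm_ge0 order_trans)

lemma Knorm_bound:
  fixes K :: "'u::euclidean_space \<Rightarrow> 's::euclidean_space \<Rightarrow> real^'n^'m"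
  assumes "inK \<alpha> \<beta> K"
  shows "Kbound \<alpha> \<beta> K (Knorm \<alpha> \<beta> K)"
proof -
  let ?S = "{C. Kbound \<alpha> \<beta> K C}"
  have ne: "?S \<noteq> {}" using assms unfolding inK_def by auto
  have pos: "\<forall>C\<in>?S. 0 \<le> C" using Kbound_ge0 by blast
  have "mnorm (K x y) \<le> Inf ?S * 1" for x y
    by (rule inf_helper[OF ne _ _ pos]) (auto simp: Kbound_def)
  moreover have "mnorm (K x y - K x' y) \<le> Inf ?S * norm (x - x') powr \<beta>" for x x' y
    by (rule inf_helper[OF ne _ _ pos]) (auto simp: Kbound_def)
  moreover have "mnorm (K x y - K x y') \<le> Inf ?S * norm (y - y') powr \<alpha>" for x y y'
    by (rule inf_helper[OF ne _ _ pos]) (auto simp: Kbound_def)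
  moreover have "mnorm (K x y - K x' y - K x y' + K x' y')
      \<le> Inf ?S * (norm (x - x') powr \<beta> * norm (y - y') powr (\<alpha> - \<beta>))" for x x' y y'
    by (rule inf_helper[OF ne _ _ pos]) (auto simp: Kbound_def mult.assoc)
  ultimately show ?thesis unfolding Kbound_def Knorm_def by (simp add: mult.assoc)
qed

lemma Knorm_le:
  fixes K :: "'u::euclidean_space \<Rightarrow> 's::euclidean_space \<Rightarrow> real^'n^'m"
  assumes "Kbound \<alpha> \<beta> K C"
  shows "Knorm \<alpha> \<beta> K \<le> C"
  unfolding Knorm_def
proof (rule cInf_lower)
  show "bdd_below {C. Kbound \<alpha> \<beta> K C}"
    unfolding bdd_below_def using Kbound_ge0 by blast
qed (use assms in simp)

lemma Knorm_ge0:
  fixes K :: "'u::euclidean_space \<Rightarrow> 's::euclidean_space \<Rightarrow> real^'n^'m"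
  shows "inK \<alpha> \<beta> K \<Longrightarrow> 0 \<le> Knorm \<alpha> \<beta> K"
  using Knorm_bound Kbound_ge0 by blast



lemma part1:
  fixes K :: "'u::euclidean_space \<Rightarrow> 's::euclidean_space \<Rightarrow> real^'n^'m"
  assumes ab: "0 < \<beta>" "\<beta> < \<alpha>" and K: "inK \<alpha> \<beta> K"
  shows "mnorm (K x y - K x' y') \<le> 3 * Knorm \<alpha> \<beta> K * (norm (x - x') + norm (y - y')) powr \<beta>"
proof -
  define C where "C = Knorm \<alpha> \<beta> K"
  have KB: "Kbound \<alpha> \<beta> K C" using Knorm_bound[OF K] C_def by simp
  have C0: "0 \<le> C" using Kbound_ge0[OF KB] .
  define D where "D = (norm (x - x') + norm (y - y')) powr \<beta>"
  have e: "K x y - K x' y' = (K x y - K x' y) + (K x' y - K x' y')" by simp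
  have t1: "mnorm (K x y - K x' y) \<le> C * D"
  proof -
    have "mnorm (K x y - K x' y) \<le> C * norm (x - x') powr \<beta>" using KB unfolding Kbound_def by blast
    also have "\<dots> \<le> C * D" unfolding D_def
      by (intro mult_left_mono powr_mono2) (use ab C0 in auto)
    finally show ?thesis .
  qed
  have t2: "mnorm (K x' y - K x' y') \<le> (2 * C) * D"
  proof -
    have a: "mnorm (K x' y - K x' y') \<le> 2 * C"
    proof -
      have "mnorm (K x' y) \<le> C" "mnorm (K x' y') \<le> C" using KB unfolding Kbound_def by blast+
      thus ?thesis using mnorm_diff[of "K x' y" "K x' y'"] by linarith
    qed
    have b: "mnorm (K x' y - K x' y') \<le> C * norm (y - y') powr \<alpha>" using KB unfolding Kbound_def by blast
    have "mnorm (K x' y - K x' y') \<le> max (2 * C) C * norm (y - y') powr \<beta>"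
      by (rule switch[OF _ _ _ _ _ a b]) (use ab C0 in auto)
    also have "\<dots> = 2 * C * norm (y - y') powr \<beta>" using C0 by simp
    also have "\<dots> \<le> 2 * C * D" unfolding D_def
      by (intro mult_left_mono powr_mono2) (use ab C0 in auto)
    finally show ?thesis .
  qed
  have "mnorm (K x y - K x' y') \<le> C * D + 2 * C * D"
    unfolding e using mnorm_add[of "K x y - K x' y" "K x' y - K x' y'"] t1 t2 by linarith
  thus ?thesis unfolding C_def D_def by simp
qed

lemma part2:
  fixes K K' :: "'u::euclidean_space \<Rightarrow> 's::euclidean_space \<Rightarrow> real^'n^'m"
  assumes K: "inK \<alpha> \<beta> K" and K': "inK \<alpha> \<beta> K'"
  shows "Kbound \<alpha> \<beta> (\<lambda>x y. K x y + K' x y) (Knorm \<alpha> \<beta> K + Knorm \<alpha> \<beta> K')"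
proof -
  define C where "C = Knorm \<alpha> \<beta> K"
  define C' where "C' = Knorm \<alpha> \<beta> K'"
  have KB: "Kbound \<alpha> \<beta> K C" using Knorm_bound[OF K] C_def by simp
  have KB': "Kbound \<alpha> \<beta> K' C'" using Knorm_bound[OF K'] C'_def by simp
  have tri: "mnorm (A + B) \<le> c * t + c' * t" if "mnorm A \<le> c * t" "mnorm B \<le> c' * t"
    for A B :: "real^'n^'m" and c c' t :: real
    using mnorm_add[of A B] that by linarith
  have "Kbound \<alpha> \<beta> (\<lambda>x y. K x y + K' x y) (C + C')"
    unfolding Kbound_def distrib_right
  proof (intro conjI allI)
    fix x y show "mnorm (K x y + K' x y) \<le> C + C'"
      using tri[of "K x y" C 1 "K' x y" C'] KB KB' unfolding Kbound_def by simp
  next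
    fix x x' y
    have "K x y + K' x y - (K x' y + K' x' y) = (K x y - K x' y) + (K' x y - K' x' y)" by simp
    note e = this
    have "mnorm (K x y - K x' y) \<le> C * norm (x - x') powr \<beta>" using KB unfolding Kbound_def by blast
    moreover have "mnorm (K' x y - K' x' y) \<le> C' * norm (x - x') powr \<beta>" using KB' unfolding Kbound_def by blast
    ultimately have "mnorm ((K x y - K x' y) + (K' x y - K' x' y)) \<le> C * norm (x - x') powr \<beta> + C' * norm (x - x') powr \<beta>" by (rule tri)
    then show "mnorm (K x y + K' x y - (K x' y + K' x' y)) \<le> C * norm (x - x') powr \<beta> + C' * norm (x - x') powr \<beta>"
      unfolding e .
  next
    fix x y y'
    have "K x y + K' x y - (K x y' + K' x y') = (K x y - K x y') + (K' x y - K' x y')" by simp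
    note e = this
    have "mnorm (K x y - K x y') \<le> C * norm (y - y') powr \<alpha>" using KB unfolding Kbound_def by blast
    moreover have "mnorm (K' x y - K' x y') \<le> C' * norm (y - y') powr \<alpha>" using KB' unfolding Kbound_def by blast
    ultimately have "mnorm ((K x y - K x y') + (K' x y - K' x y')) \<le> C * norm (y - y') powr \<alpha> + C' * norm (y - y') powr \<alpha>" by (rule tri)
    then show "mnorm (K x y + K' x y - (K x y' + K' x y')) \<le> C * norm (y - y') powr \<alpha> + C' * norm (y - y') powr \<alpha>"
      unfolding e .
  next
    fix x x' y y'
    have "K x y + K' x y - (K x' y + K' x' y) - (K x y' + K' x y') + (K x' y' + K' x' y') =
       (K x y - K x' y - K x y' + K x' y') + (K' x y - K' x' y - K' x y' + K' x' y')" (is "?l = ?r") by simp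
    note e = this
    show "mnorm (K x y + K' x y - (K x' y + K' x' y) - (K x y' + K' x y') + (K x' y' + K' x' y'))
       \<le> C * norm (x - x') powr \<beta> * norm (y - y') powr (\<alpha> - \<beta>) +
          C' * norm (x - x') powr \<beta> * norm (y - y') powr (\<alpha> - \<beta>)"
    proof -
      have "mnorm (K x y - K x' y - K x y' + K x' y') \<le> C * (norm (x - x') powr \<beta> * norm (y - y') powr (\<alpha> - \<beta>))"
        using KB unfolding Kbound_def mult.assoc by blast
      moreover have "mnorm (K' x y - K' x' y - K' x y' + K' x' y') \<le> C' * (norm (x - x') powr \<beta> * norm (y - y') powr (\<alpha> - \<beta>))"
        using KB' unfolding Kbound_def mult.assoc by blast
      ultimately have "mnorm ?r \<le> C * (norm (x - x') powr \<beta> * norm (y - y') powr (\<alpha> - \<beta>)) + C' * (norm (x - x') powr \<beta> * norm (y - y') powr (\<alpha> - \<beta>))" by (rule tri)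
      then show ?thesis unfolding e by (simp add: mult.assoc)
    qed
  qed
  thus ?thesis unfolding C_def C'_def .
qed



lemma KbD1: "Kbound \<alpha> \<beta> K C \<Longrightarrow> mnorm (K x y) \<le> C" unfolding Kbound_def by blast
lemma KbD2: "Kbound \<alpha> \<beta> K C \<Longrightarrow> mnorm (K x y - K x' y) \<le> C * norm (x - x') powr \<beta>" unfolding Kbound_def by blast
lemma KbD3: "Kbound \<alpha> \<beta> K C \<Longrightarrow> mnorm (K x y - K x y') \<le> C * norm (y - y') powr \<alpha>" unfolding Kbound_def by blast
lemma KbD4: "Kbound \<alpha> \<beta> K C \<Longrightarrow> mnorm (K x y - K x' y - K x y' + K x' y') \<le> C * (norm (x - x') powr \<beta> * norm (y - y') powr (\<alpha> - \<beta>))"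
  unfolding Kbound_def mult.assoc by blast
lemma Kdiff2: "Kbound \<alpha> \<beta> K C \<Longrightarrow> mnorm (K a b - K c d) \<le> 2 * C"
  using KbD1[of \<alpha> \<beta> K C a b] KbD1[of \<alpha> \<beta> K C c d] mnorm_diff[of "K a b" "K c d"] by linarith

lemma sw2:
  fixes D :: "real^'n^'m"
  assumes "0 \<le> c" "0 \<le> \<gamma>" "\<gamma> \<le> \<alpha>" "mnorm D \<le> 2 * c" "mnorm D \<le> c * t powr \<alpha>" "0 \<le> t"
  shows "mnorm D \<le> 2 * c * t powr \<gamma>"
proof -
  have "mnorm D \<le> max (2 * c) c * t powr \<gamma>"
    by (rule switch) (use assms in auto)
  thus ?thesis using assms by simp
qed

lemma prod_x:
  fixes A1 A2 :: "real^'n^'m" and B1 B2 :: "real^'p^'n"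
  shows "A1 ** B1 - A2 ** B2 = (A1 - A2) ** B1 + A2 ** (B1 - B2)"
  by (simp add: mm_diff_r mm_diff_l)

lemma prod_mixed:
  fixes A1 A2 A3 A4 :: "real^'n^'m" and B1 B2 B3 B4 :: "real^'p^'n"
  shows "A1 ** B1 - A2 ** B2 - A3 ** B3 + A4 ** B4 =
    (A1 - A2 - A3 + A4) ** B1 + (A3 - A4) ** (B1 - B3) + (A2 - A4) ** (B1 - B2) + A4 ** (B1 - B2 - B3 + B4)"
  by (simp add: mm_add_r mm_diff_r mm_add_l mm_diff_l algebra_simps)



lemma part3:
  fixes K :: "'u::euclidean_space \<Rightarrow> 's::euclidean_space \<Rightarrow> real^'n^'m"
    and K' :: "'u \<Rightarrow> 's \<Rightarrow> real^'p^'n"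
  assumes ab: "0 < \<beta>" "\<beta> < \<alpha>" and KB: "Kbound \<alpha> \<beta> K C" and KB': "Kbound \<alpha> \<beta> K' C'"
  shows "Kbound \<alpha> \<beta> (\<lambda>x y. K x y ** K' x y) (6 * C * C')"
proof -
  have C0: "0 \<le> C" using Kbound_ge0[OF KB] .
  have C0': "0 \<le> C'" using Kbound_ge0[OF KB'] .
  have CC: "0 \<le> C * C'" using C0 C0' by simp
  show ?thesis unfolding Kbound_def
  proof (intro conjI allI)
    fix x y
    have "mnorm (K x y ** K' x y) \<le> C * C'" by (rule mnorm_mul_le[OF KbD1[OF KB] KbD1[OF KB']])
    thus "mnorm (K x y ** K' x y) \<le> 6 * C * C'" using CC by linarith
  next
    fix x x' :: 'u and y :: 's
    define t where "t = norm (x - x') powr \<beta>"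
    have t0: "0 \<le> t" unfolding t_def by simp
    have "mnorm ((K x y - K x' y) ** K' x y) \<le> (C * t) * C'"
      using mnorm_mul_le[OF KbD2[OF KB] KbD1[OF KB']] by (simp add: t_def)
    moreover have "mnorm (K x' y ** (K' x y - K' x' y)) \<le> C * (C' * t)"
      using mnorm_mul_le[OF KbD1[OF KB] KbD2[OF KB']] by (simp add: t_def)
    ultimately have "mnorm (K x y ** K' x y - K x' y ** K' x' y) \<le> (C * t) * C' + C * (C' * t)"
      unfolding prod_x using mnorm_add order_trans add_mono by (smt (verit))
    also have "\<dots> = 2 * (C * C' * t)" by (simp add: algebra_simps)
    also have "\<dots> \<le> 6 * (C * C' * t)" using mult_nonneg_nonneg[OF CC t0] by linarith
    finally show "mnorm (K x y ** K' x y - K x' y ** K' x' y) \<le> 6 * C * C' * norm (x - x') powr \<beta>"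
      by (simp add: t_def mult_ac)
  next
    fix x :: 'u and y y' :: 's
    define t where "t = norm (y - y') powr \<alpha>"
    have t0: "0 \<le> t" unfolding t_def by simp
    have "mnorm ((K x y - K x y') ** K' x y) \<le> (C * t) * C'"
      using mnorm_mul_le[OF KbD3[OF KB] KbD1[OF KB']] by (simp add: t_def)
    moreover have "mnorm (K x y' ** (K' x y - K' x y')) \<le> C * (C' * t)"
      using mnorm_mul_le[OF KbD1[OF KB] KbD3[OF KB']] by (simp add: t_def)
    ultimately have "mnorm (K x y ** K' x y - K x y' ** K' x y') \<le> (C * t) * C' + C * (C' * t)"
      unfolding prod_x using mnorm_add order_trans add_mono by (smt (verit))
    also have "\<dots> = 2 * (C * C' * t)" by (simp add: algebra_simps)
    also have "\<dots> \<le> 6 * (C * C' * t)" using mult_nonneg_nonneg[OF CC t0] by linarith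
    finally show "mnorm (K x y ** K' x y - K x y' ** K' x y') \<le> 6 * C * C' * norm (y - y') powr \<alpha>"
      by (simp add: t_def mult_ac)
  next
    fix x x' :: 'u and y y' :: 's
    define s where "s = norm (x - x') powr \<beta>"
    define r where "r = norm (y - y') powr (\<alpha> - \<beta>)"
    have s0: "0 \<le> s" unfolding s_def by simp
    have r0: "0 \<le> r" unfolding r_def by simp
    have g: "0 \<le> \<alpha> - \<beta>" "\<alpha> - \<beta> \<le> \<alpha>" using ab by auto
    have b1: "mnorm ((K x y - K x' y - K x y' + K x' y') ** K' x y) \<le> (C * (s * r)) * C'"
      using mnorm_mul_le[OF KbD4[OF KB] KbD1[OF KB']] by (simp add: s_def r_def)
    have b2: "mnorm ((K x y' - K x' y') ** (K' x y - K' x y')) \<le> (C * s) * (2 * C' * r)"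
    proof (rule mnorm_mul_le)
      show "mnorm (K x y' - K x' y') \<le> C * s" using KbD2[OF KB] s_def by simp
      show "mnorm (K' x y - K' x y') \<le> 2 * C' * r" unfolding r_def
        by (rule sw2[OF C0' g Kdiff2[OF KB'] KbD3[OF KB']]) simp
    qed
    have b3: "mnorm ((K x' y - K x' y') ** (K' x y - K' x' y)) \<le> (2 * C * r) * (C' * s)"
    proof (rule mnorm_mul_le)
      show "mnorm (K' x y - K' x' y) \<le> C' * s" using KbD2[OF KB'] s_def by simp
      show "mnorm (K x' y - K x' y') \<le> 2 * C * r" unfolding r_def
        by (rule sw2[OF C0 g Kdiff2[OF KB] KbD3[OF KB]]) simp
    qed
    have b4: "mnorm (K x' y' ** (K' x y - K' x' y - K' x y' + K' x' y')) \<le> C * (C' * (s * r))"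
      using mnorm_mul_le[OF KbD1[OF KB] KbD4[OF KB']] by (simp add: s_def r_def)
    let ?T1 = "(K x y - K x' y - K x y' + K x' y') ** K' x y"
    let ?T2 = "(K x y' - K x' y') ** (K' x y - K' x y')"
    let ?T3 = "(K x' y - K x' y') ** (K' x y - K' x' y)"
    let ?T4 = "K x' y' ** (K' x y - K' x' y - K' x y' + K' x' y')"
    have "mnorm (?T1 + ?T2 + ?T3 + ?T4) \<le> mnorm ?T1 + mnorm ?T2 + mnorm ?T3 + mnorm ?T4"
      by (meson add_mono mnorm_add order_trans order_refl)
    also have "\<dots> \<le> (C * (s * r)) * C' + (C * s) * (2 * C' * r) + (2 * C * r) * (C' * s) + C * (C' * (s * r))"
      using b1 b2 b3 b4 by linarith
    also have "\<dots> = 6 * C * C' * s * r" by (simp add: algebra_simps)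
    finally show "mnorm (K x y ** K' x y - K x' y ** K' x' y - K x y' ** K' x y' + K x' y' ** K' x' y')
       \<le> 6 * C * C' * norm (x - x') powr \<beta> * norm (y - y') powr (\<alpha> - \<beta>)"
      unfolding prod_mixed s_def r_def .
  qed
qed



lemma inv_r: "invertible (A::real^'q^'q) \<Longrightarrow> A ** matrix_inv A = mat 1"
  unfolding invertible_def matrix_inv_def by (rule someI_ex[THEN conjunct1])
lemma inv_l: "invertible (A::real^'q^'q) \<Longrightarrow> matrix_inv A ** A = mat 1"
  unfolding invertible_def matrix_inv_def by (rule someI_ex[THEN conjunct2])

lemma inv_diff:
  fixes B1 B2 K1 K2 :: "real^'q^'q"
  assumes "B1 ** K1 = mat 1" "K2 ** B2 = mat 1"
  shows "B1 - B2 = (B1 ** (K2 - K1)) ** B2"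
proof -
  have "(B1 ** (K2 - K1)) ** B2 = B1 ** (K2 ** B2) - (B1 ** K1) ** B2"
    by (simp add: mm_diff_l mm_diff_r matrix_mul_assoc)
  also have "\<dots> = B1 - B2" using assms by simp
  finally show ?thesis by simp
qed

lemma inv_mixed:
  fixes B1 B2 B3 B4 K1 K2 K3 K4 :: "real^'q^'q"
  assumes "B1 ** K1 = mat 1" "K2 ** B2 = mat 1" "B3 ** K3 = mat 1" "K4 ** B4 = mat 1"
  shows "B1 - B2 - B3 + B4 = (B1 ** ((K2 - K1) - (K4 - K3))) ** B2 + ((B1 - B3) ** (K4 - K3)) ** B2
           + (B3 ** (K4 - K3)) ** (B2 - B4)"
proof -
  define X where "X = K4 - K3"
  have a: "(B1 ** ((K2 - K1) - X)) ** B2 = (B1 ** (K2 - K1)) ** B2 - (B1 ** X) ** B2"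
    by (simp add: mm_diff_l mm_diff_r)
  have b: "((B1 - B3) ** X) ** B2 = (B1 ** X) ** B2 - (B3 ** X) ** B2"
    by (simp add: mm_diff_l mm_diff_r)
  have c: "(B3 ** X) ** (B2 - B4) = (B3 ** X) ** B2 - (B3 ** X) ** B4"
    by (simp add: mm_diff_l mm_diff_r)
  have d1: "(B1 ** (K2 - K1)) ** B2 = B1 - B2" using inv_diff[OF assms(1,2)] by simp
  have d2: "(B3 ** X) ** B4 = B3 - B4" using inv_diff[OF assms(3,4)] X_def by simp
  show ?thesis unfolding X_def[symmetric] a b c d1 d2 by simp
qed

lemma pw_le: "0 \<le> (h::real) \<Longrightarrow> h \<le> max 1 (h^3) \<and> h * h \<le> max 1 (h^3) \<and> h^3 \<le> max 1 (h^3)"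
proof -
  assume h0: "0 \<le> h"
  show ?thesis
  proof (cases "h \<le> 1")
    case True
    have "h * h \<le> 1 * 1" by (rule mult_mono) (use True h0 in auto)
    thus ?thesis using True by auto
  next
    case False
    have "h * 1 \<le> h * h" by (rule mult_left_mono) (use False in auto)
    moreover have "h * h * 1 \<le> h * h * h" by (rule mult_left_mono) (use False in auto)
    ultimately show ?thesis by (auto simp: power3_eq_cube le_max_iff_disj)
  qed
qed



lemma part4:
  fixes K :: "'u::euclidean_space \<Rightarrow> 's::euclidean_space \<Rightarrow> real^'q^'q"
  assumes ab: "0 < \<beta>" "\<beta> < \<alpha>" and KB: "Kbound \<alpha> \<beta> K C"
    and inv: "\<forall>x y. invertible (K x y)" and hb: "\<forall>x y. mnorm (matrix_inv (K x y)) \<le> h"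
  shows "Kbound \<alpha> \<beta> (\<lambda>x y. matrix_inv (K x y)) (5 * max 1 (h ^ 3) * max 1 (C ^ 3))"
proof -
  define B where "B = (\<lambda>x y. matrix_inv (K x y))"
  have C0: "0 \<le> C" using Kbound_ge0[OF KB] .
  have h0: "0 \<le> h" using hb mnorm_ge0 order_trans by blast
  have Bh: "mnorm (B x y) \<le> h" for x y using hb B_def by simp
  have BK: "B x y ** K x y = mat 1" for x y unfolding B_def using inv inv_l by blast
  have KB1: "K x y ** B x y = mat 1" for x y unfolding B_def using inv inv_r by blast
  define H where "H = max 1 (h ^ 3)"
  define G where "G = max 1 (C ^ 3)"
  define M where "M = H * G"
  have H1: "1 \<le> H" and G1: "1 \<le> G" unfolding H_def G_def by auto
  have hH: "h \<le> H" "h * h \<le> H" "h * h * h \<le> H" using pw_le[OF h0] unfolding H_def by (auto simp: power3_eq_cube)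
  have CG: "C \<le> G" "C * C \<le> G" using pw_le[OF C0] unfolding G_def by auto
  have M1: "h \<le> M"
  proof -
    have "H * 1 \<le> H * G" by (rule mult_left_mono) (use G1 H1 in auto)
    thus ?thesis unfolding M_def using hH(1) by linarith
  qed
  have M2: "h * h * C \<le> M" unfolding M_def
    by (rule mult_mono) (use hH CG C0 h0 H1 in auto)
  have M3: "h * h * h * (C * C) \<le> M" unfolding M_def
    by (rule mult_mono) (use hH CG C0 h0 H1 in auto)
  have M0: "0 \<le> M" using M2 h0 C0 by (meson mult_nonneg_nonneg order_trans)
  have E: "max (2 * h) (h * h * C) * C * h \<le> 2 * M"
  proof (cases "2 * h \<le> h * h * C")
    case True
    hence "max (2 * h) (h * h * C) * C * h = h * h * h * (C * C)" by (simp add: algebra_simps)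
    thus ?thesis using M3 M0 by linarith
  next
    case False
    hence "max (2 * h) (h * h * C) * C * h = 2 * (h * h * C)" by (simp add: algebra_simps)
    thus ?thesis using M2 by linarith
  qed
  have onestep: "mnorm (B x y - B x' y') \<le> (h * h * C) * t" if "mnorm (K x y - K x' y') \<le> C * t" for x x' y y' t
  proof -
    have eq: "B x y - B x' y' = (B x y ** (K x' y' - K x y)) ** B x' y'" by (rule inv_diff[OF BK KB1])
    have kk: "mnorm (K x' y' - K x y) \<le> C * t" using that mnorm_sym[of "K x y" "K x' y'"] by simp
    have "mnorm (B x y - B x' y') \<le> h * (C * t) * h"
      unfolding eq by (rule mnorm_mul_le[OF mnorm_mul_le[OF Bh kk] Bh])
    thus ?thesis by (simp add: algebra_simps)
  qed
  have "Kbound \<alpha> \<beta> B (5 * M)" unfolding Kbound_def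
  proof (intro conjI allI)
    fix x y show "mnorm (B x y) \<le> 5 * M" using Bh[of x y] M1 M0 by linarith
  next
    fix x x' :: 'u and y :: 's
    define t where "t = norm (x - x') powr \<beta>"
    have t0: "0 \<le> t" unfolding t_def by simp
    have "mnorm (B x y - B x' y) \<le> (h * h * C) * t" by (rule onestep) (use KbD2[OF KB] t_def in simp)
    also have "\<dots> \<le> (5 * M) * t" by (rule mult_right_mono) (use M2 M0 t0 in auto)
    finally show "mnorm (B x y - B x' y) \<le> 5 * M * norm (x - x') powr \<beta>" unfolding t_def .
  next
    fix x :: 'u and y y' :: 's
    define t where "t = norm (y - y') powr \<alpha>"
    have t0: "0 \<le> t" unfolding t_def by simp
    have "mnorm (B x y - B x y') \<le> (h * h * C) * t" by (rule onestep) (use KbD3[OF KB] t_def in simp)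
    also have "\<dots> \<le> (5 * M) * t" by (rule mult_right_mono) (use M2 M0 t0 in auto)
    finally show "mnorm (B x y - B x y') \<le> 5 * M * norm (y - y') powr \<alpha>" unfolding t_def .
  next
    fix x x' :: 'u and y y' :: 's
    define s where "s = norm (x - x') powr \<beta>"
    define r where "r = norm (y - y') powr (\<alpha> - \<beta>)"
    have s0: "0 \<le> s" unfolding s_def by simp
    have r0: "0 \<le> r" unfolding r_def by simp
    have sr0: "0 \<le> s * r" using s0 r0 by simp
    have g: "0 \<le> \<alpha> - \<beta>" "\<alpha> - \<beta> \<le> \<alpha>" using ab by auto
    let ?E = "max (2 * h) (h * h * C)"
    have id: "B x y - B x' y - B x y' + B x' y' =
       (B x y ** ((K x' y - K x y) - (K x' y' - K x y'))) ** B x' y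
       + ((B x y - B x y') ** (K x' y' - K x y')) ** B x' y
       + (B x y' ** (K x' y' - K x y')) ** (B x' y - B x' y')"
      by (rule inv_mixed[OF BK KB1 BK KB1])
    have k1: "mnorm ((K x' y - K x y) - (K x' y' - K x y')) \<le> C * (s * r)"
    proof -
      have eq: "(K x' y - K x y) - (K x' y' - K x y') = - (K x y - K x' y - K x y' + K x' y')" by simp
      show ?thesis unfolding eq mnorm_neg using KbD4[OF KB, of x y x' y'] by (simp add: s_def r_def)
    qed
    have k2: "mnorm (K x' y' - K x y') \<le> C * s"
      using KbD2[OF KB, of x y' x'] mnorm_sym[of "K x' y'" "K x y'"] s_def by simp
    have bb: "mnorm (B x y - B x y') \<le> ?E * r"
    proof -
      have a: "mnorm (B x y - B x y') \<le> 2 * h" using mnorm_diff[of "B x y" "B x y'"] Bh[of x y] Bh[of x y'] by linarith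
      have b: "mnorm (B x y - B x y') \<le> (h * h * C) * norm (y - y') powr \<alpha>"
        by (rule onestep) (use KbD3[OF KB] in simp)
      show ?thesis unfolding r_def by (rule switch[OF _ _ _ _ _ a b]) (use h0 C0 g in auto)
    qed
    have bb': "mnorm (B x' y - B x' y') \<le> ?E * r"
    proof -
      have a: "mnorm (B x' y - B x' y') \<le> 2 * h" using mnorm_diff[of "B x' y" "B x' y'"] Bh[of x' y] Bh[of x' y'] by linarith
      have b: "mnorm (B x' y - B x' y') \<le> (h * h * C) * norm (y - y') powr \<alpha>"
        by (rule onestep) (use KbD3[OF KB] in simp)
      show ?thesis unfolding r_def by (rule switch[OF _ _ _ _ _ a b]) (use h0 C0 g in auto)
    qed
    have E0: "0 \<le> ?E" using h0 by simp
    have T1: "mnorm ((B x y ** ((K x' y - K x y) - (K x' y' - K x y'))) ** B x' y) \<le> M * (s * r)"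
    proof -
      have "mnorm ((B x y ** ((K x' y - K x y) - (K x' y' - K x y'))) ** B x' y) \<le> h * (C * (s * r)) * h"
        by (rule mnorm_mul_le[OF mnorm_mul_le[OF Bh k1] Bh])
      also have "\<dots> = (h * h * C) * (s * r)" by (simp add: algebra_simps)
      also have "\<dots> \<le> M * (s * r)" by (rule mult_right_mono[OF M2 sr0])
      finally show ?thesis .
    qed
    have T2: "mnorm (((B x y - B x y') ** (K x' y' - K x y')) ** B x' y) \<le> (2 * M) * (s * r)"
    proof -
      have "mnorm (((B x y - B x y') ** (K x' y' - K x y')) ** B x' y) \<le> (?E * r) * (C * s) * h"
        by (rule mnorm_mul_le[OF mnorm_mul_le[OF bb k2] Bh])
      also have "\<dots> = (?E * C * h) * (s * r)" by (simp add: algebra_simps)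
      also have "\<dots> \<le> (2 * M) * (s * r)" by (rule mult_right_mono[OF E sr0])
      finally show ?thesis .
    qed
    have T3: "mnorm ((B x y' ** (K x' y' - K x y')) ** (B x' y - B x' y')) \<le> (2 * M) * (s * r)"
    proof -
      have "mnorm ((B x y' ** (K x' y' - K x y')) ** (B x' y - B x' y')) \<le> h * (C * s) * (?E * r)"
        by (rule mnorm_mul_le[OF mnorm_mul_le[OF Bh k2] bb'])
      also have "\<dots> = (?E * C * h) * (s * r)" by (simp add: algebra_simps)
      also have "\<dots> \<le> (2 * M) * (s * r)" by (rule mult_right_mono[OF E sr0])
      finally show ?thesis .
    qed
    have "mnorm (B x y - B x' y - B x y' + B x' y') \<le> M * (s * r) + (2 * M) * (s * r) + (2 * M) * (s * r)"
      unfolding id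
      by (rule order_trans[OF mnorm_add add_mono[OF order_trans[OF mnorm_add add_mono[OF T1 T2]] T3]])
    also have "\<dots> = 5 * M * s * r" by (simp add: algebra_simps)
    finally show "mnorm (B x y - B x' y - B x y' + B x' y') \<le> 5 * M * norm (x - x') powr \<beta> * norm (y - y') powr (\<alpha> - \<beta>)"
      unfolding s_def r_def .
  qed
  thus ?thesis unfolding B_def M_def H_def G_def by (simp add: mult.assoc)
qed


theorem mainTheorem10:
  fixes \<alpha> \<beta> :: real
  assumes "0 < \<alpha>" and "\<alpha> \<le> 1" and "0 < \<beta>" and "\<beta> < \<alpha>"
  shows
   "(\<forall>(K :: 'u::euclidean_space \<Rightarrow> 's::euclidean_space \<Rightarrow> real^'n^'m) x x' y y'.
       inK \<alpha> \<beta> K \<longrightarrow>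
       mnorm (K x y - K x' y') \<le> 3 * Knorm \<alpha> \<beta> K * (norm (x - x') + norm (y - y')) powr \<beta>)
  \<and> (\<forall>(K :: 'u \<Rightarrow> 's \<Rightarrow> real^'n^'m) K'.
       inK \<alpha> \<beta> K \<and> inK \<alpha> \<beta> K' \<longrightarrow>
       inK \<alpha> \<beta> (\<lambda>x y. K x y + K' x y) \<and>
       Knorm \<alpha> \<beta> (\<lambda>x y. K x y + K' x y) \<le> Knorm \<alpha> \<beta> K + Knorm \<alpha> \<beta> K')
  \<and> (\<forall>(K :: 'u \<Rightarrow> 's \<Rightarrow> real^'n^'m) (K' :: 'u \<Rightarrow> 's \<Rightarrow> real^'p^'n).
       inK \<alpha> \<beta> K \<and> inK \<alpha> \<beta> K' \<longrightarrow>
       inK \<alpha> \<beta> (\<lambda>x y. K x y ** K' x y) \<and>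
       Knorm \<alpha> \<beta> (\<lambda>x y. K x y ** K' x y) \<le> 6 * Knorm \<alpha> \<beta> K * Knorm \<alpha> \<beta> K')
  \<and> (\<forall>(K :: 'u \<Rightarrow> 's \<Rightarrow> real^'q^'q) h.
       inK \<alpha> \<beta> K \<and> (\<forall>x y. invertible (K x y)) \<and>
       (\<forall>x y. mnorm (matrix_inv (K x y)) \<le> h) \<longrightarrow>
       inK \<alpha> \<beta> (\<lambda>x y. matrix_inv (K x y)) \<and>
       Knorm \<alpha> \<beta> (\<lambda>x y. matrix_inv (K x y))
         \<le> 5 * max 1 (h ^ 3) * max 1 (Knorm \<alpha> \<beta> K ^ 3))"
  proof (intro conjI allI impI)
  have ab: "0 < \<beta>" "\<beta> < \<alpha>" using assms by auto
  show "mnorm (K x y - K x' y') \<le> 3 * Knorm \<alpha> \<beta> K * (norm (x - x') + norm (y - y')) powr \<beta>"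
    if "inK \<alpha> \<beta> K" for K :: "'u::euclidean_space \<Rightarrow> 's::euclidean_space \<Rightarrow> real^'n^'m" and x x' y y'
    by (rule part1[OF ab that])
  fix K K' :: "'u \<Rightarrow> 's \<Rightarrow> real^'n^'m"
  assume h: "inK \<alpha> \<beta> K \<and> inK \<alpha> \<beta> K'"
  have P: "Kbound \<alpha> \<beta> (\<lambda>x y. K x y + K' x y) (Knorm \<alpha> \<beta> K + Knorm \<alpha> \<beta> K')"
    using part2 h by blast
  show "inK \<alpha> \<beta> (\<lambda>x y. K x y + K' x y)" using P unfolding inK_def by blast
  show "Knorm \<alpha> \<beta> (\<lambda>x y. K x y + K' x y) \<le> Knorm \<alpha> \<beta> K + Knorm \<alpha> \<beta> K'"
    by (rule Knorm_le[OF P])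
next
  have ab: "0 < \<beta>" "\<beta> < \<alpha>" using assms by auto
  fix K :: "'u \<Rightarrow> 's \<Rightarrow> real^'n^'m" and K' :: "'u \<Rightarrow> 's \<Rightarrow> real^'p^'n"
  assume h: "inK \<alpha> \<beta> K \<and> inK \<alpha> \<beta> K'"
  have P: "Kbound \<alpha> \<beta> (\<lambda>x y. K x y ** K' x y) (6 * Knorm \<alpha> \<beta> K * Knorm \<alpha> \<beta> K')"
    using part3[OF ab Knorm_bound Knorm_bound] h by blast
  show "inK \<alpha> \<beta> (\<lambda>x y. K x y ** K' x y)" using P unfolding inK_def by blast
  show "Knorm \<alpha> \<beta> (\<lambda>x y. K x y ** K' x y) \<le> 6 * Knorm \<alpha> \<beta> K * Knorm \<alpha> \<beta> K'"
    by (rule Knorm_le[OF P])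
next
  have ab: "0 < \<beta>" "\<beta> < \<alpha>" using assms by auto
  fix K :: "'u \<Rightarrow> 's \<Rightarrow> real^'q^'q" and h :: real
  assume hh: "inK \<alpha> \<beta> K \<and> (\<forall>x y. invertible (K x y)) \<and> (\<forall>x y. mnorm (matrix_inv (K x y)) \<le> h)"
  have P: "Kbound \<alpha> \<beta> (\<lambda>x y. matrix_inv (K x y)) (5 * max 1 (h ^ 3) * max 1 (Knorm \<alpha> \<beta> K ^ 3))"
    using part4[OF ab Knorm_bound] hh by blast
  show "inK \<alpha> \<beta> (\<lambda>x y. matrix_inv (K x y))" using P unfolding inK_def by blast
  show "Knorm \<alpha> \<beta> (\<lambda>x y. matrix_inv (K x y)) \<le> 5 * max 1 (h ^ 3) * max 1 (Knorm \<alpha> \<beta> K ^ 3)"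
    by (rule Knorm_le[OF P])
qed

end
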